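(* For every integer $r\ge1$, writing $\zeta_r(0|z)=\zeta(0,\ldots,0|z)$ ($r$ zeros), \[ \zeta_r(0|1)=\frac{(-1)^r}{r+1}\qquad\text{and}\qquad\zeta_r(0|0)=\frac{(-1)^{r+1}}{r(r+1)}. \]
   Context: Normalized multiple Bernoulli polynomials: for integers $k\ge0$, $\zeta(-k|z)=-\frac{B_{k+1}(z)}{k+1}$ ($B_n(z)$ the Bernoulli polynomials, $B_n=B_n(0)$), and for $r\ge2$, $k_j\ge0$, $\zeta(-k_1,\ldots,-k_r|z)=-\frac{1}{k_r+1}\zeta(-k_1,\ldots,-k_{r-2},-k_{r-1}-k_r-1|z)-\frac12\zeta(-k_1,\ldots,-k_{r-2},-k_{r-1}-k_r|z)+\sum_{q=1}^{k_r}(-k_r)_q\frac{B_{q+1}}{(q+1)!}\zeta(-k_1,\ldots,-k_{r-2},-k_{r-1}-k_r+q|z)$, with $(a)_q=a(a+1)\cdots(a+q-1)$ (for $r=2$ the prefix is empty). *)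

theory Defs
  imports Complex_Main
begin

text \<open>Bernoulli numbers with the convention B_1 = -1/2, defined by the standard
recurrence: B_0 = 1 and, for n >= 1, sum_{k=0}^{n} (n+1 choose k) B_k = 0.\<close>

function bernoulli :: "nat \<Rightarrow> real" where
  "bernoulli n = (if n = 0 then 1
     else - (\<Sum>k<n. of_nat (Suc n choose k) * bernoulli k) / of_nat (Suc n))"
  by auto
termination by (relation "measure id") auto

definition bernpoly :: "nat \<Rightarrow> real \<Rightarrow> real" where
  "bernpoly n z = (\<Sum>k\<le>n. of_nat (n choose k) * bernoulli k * z ^ (n - k))"

text \<open>Normalized multiple Bernoulli polynomials zeta(-k_1,...,-k_r | z).
  The auxiliary function takes the index list in reversed order
  [k_r, k_(r-1), ..., k_1], so that the recursion acts on the head.\<close>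

fun mbp_rev :: "nat list \<Rightarrow> real \<Rightarrow> real" where
  "mbp_rev [] z = 0"
| "mbp_rev [k] z = - bernpoly (Suc k) z / of_nat (Suc k)"
| "mbp_rev (kr # kr1 # ks) z =
     - (1 / of_nat (Suc kr)) * mbp_rev ((kr1 + kr + 1) # ks) z
     - (1/2) * mbp_rev ((kr1 + kr) # ks) z
     + (\<Sum>q=1..kr. pochhammer (- of_nat kr) q * bernoulli (Suc q) / fact (Suc q)
                    * mbp_rev ((kr1 + kr - q) # ks) z)"

text \<open>mbp [k_1,...,k_r] z = zeta(-k_1,...,-k_r | z) for r >= 1.\<close>

definition mbp :: "nat list \<Rightarrow> real \<Rightarrow> real" where
  "mbp ks z = mbp_rev (rev ks) z"

end

theory Submission
  imports Defs "HOL-Computational_Algebra.Formal_Power_Series"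
begin


unbundle fps_syntax
declare bernoulli.simps[simp del]
lemma bern0[simp]: "bernoulli 0 = 1" by (simp add: bernoulli.simps)

lemma bern_sum:
  assumes "n \<ge> 1"
  shows "(\<Sum>k<n. of_nat (n choose k) * bernoulli k) = (if n = 1 then 1 else 0)"
proof (cases "n = 1")
  case True thus ?thesis by (simp add: bernoulli.simps)
next
  case False
  then obtain m where n: "n = Suc m" "m \<ge> 1" using assms by (cases n) auto
  have b: "bernoulli m * of_nat (Suc m) = - (\<Sum>k<m. of_nat (Suc m choose k) * bernoulli k)"
    using n(2) by (subst bernoulli.simps) (simp del: of_nat_Suc)
  have "(\<Sum>k<n. of_nat (n choose k) * bernoulli k) = (\<Sum>k<m. of_nat (Suc m choose k) * bernoulli k) + of_nat (Suc m) * bernoulli m"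
    using n by (simp del: of_nat_Suc)
  also have "\<dots> = 0" using b by (simp add: mult.commute)
  finally show ?thesis using False by simp
qed

definition bfps :: "real fps" where "bfps = Abs_fps (\<lambda>n. bernoulli n / fact n)"
definition afps :: "real fps" where "afps = Abs_fps (\<lambda>n. (-1)^n * bernoulli n / fact n)"
definition wfps :: "real fps" where "wfps = Abs_fps (\<lambda>n. if n = 0 then 0 else -((-1)^n / fact n))"
definition efps :: "real fps" where "efps = Abs_fps (\<lambda>n. 1 / fact n)"

lemma bern_sum_fact:
  assumes "n \<ge> 1"
  shows "(\<Sum>k<n. bernoulli k / (fact k * fact (n - k))) = (if n = 1 then 1 else 0)"
proof -
  have "(\<Sum>k<n. bernoulli k / (fact k * fact (n - k))) = (\<Sum>k<n. of_nat (n choose k) * bernoulli k) / fact n"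
    unfolding sum_divide_distrib
  proof (rule sum.cong[OF refl])
    fix k assume "k \<in> {..<n}"
    hence "k \<le> n" by simp
    thus "bernoulli k / (fact k * fact (n - k)) = of_nat (n choose k) * bernoulli k / fact n"
      by (simp add: binomial_fact field_simps)
  qed
  thus ?thesis using bern_sum[OF assms] by auto
qed

lemma aw: "afps * wfps = fps_X"
proof (rule fps_ext)
  fix n
  show "(afps * wfps) $ n = fps_X $ n"
  proof (cases "n = 0")
    case True thus ?thesis by (simp add: afps_def wfps_def)
  next
    case False
    have "(afps * wfps) $ n = (\<Sum>k<n. (-1)^k * bernoulli k / fact k * (-((-1)^(n-k) / fact (n-k))))"
      unfolding fps_mult_nth afps_def wfps_def using False
      by (simp add: atLeast0AtMost lessThan_Suc_atMost[symmetric] sum.lessThan_Suc mult.commute)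
    also have "\<dots> = (\<Sum>k<n. (-((-1::real)^n)) * (bernoulli k / (fact k * fact (n - k))))"
    proof (rule sum.cong[OF refl])
      fix k assume "k \<in> {..<n}"
      hence "(-1::real)^k * (-1)^(n-k) = (-1)^n" by (simp add: power_add[symmetric])
      thus "(-1)^k * bernoulli k / fact k * (-((-1)^(n-k) / fact (n-k))) = (-((-1::real)^n)) * (bernoulli k / (fact k * fact (n - k)))"
        by (simp add: field_simps)
    qed
    also have "\<dots> = (-((-1::real)^n)) * (\<Sum>k<n. bernoulli k / (fact k * fact (n - k)))"
      by (simp add: sum_distrib_left)
    also have "\<dots> = (-((-1::real)^n)) * (if n = 1 then 1 else 0)"
      using bern_sum_fact[of n] False by simp
    also have "\<dots> = fps_X $ n" using False by (simp add: fps_X_def)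
    finally show ?thesis .
  qed
qed

lemma be: "bfps * (efps - 1) = fps_X"
proof (rule fps_ext)
  fix n
  show "(bfps * (efps - 1)) $ n = fps_X $ n"
  proof (cases "n = 0")
    case True thus ?thesis by (simp add: bfps_def efps_def)
  next
    case False
    have "(bfps * (efps - 1)) $ n = (\<Sum>k<n. bernoulli k / fact k * (1 / fact (n-k)))"
      unfolding fps_mult_nth bfps_def efps_def using False
      by (simp add: atLeast0AtMost lessThan_Suc_atMost[symmetric] sum.lessThan_Suc mult.commute)
    also have "\<dots> = (\<Sum>k<n. bernoulli k / (fact k * fact (n - k)))" by (simp add: mult.commute)
    also have "\<dots> = fps_X $ n" using bern_sum_fact[of n] False by (simp add: fps_X_def)
    finally show ?thesis .
  qed
qed


lemma bern1: "bernoulli 1 = -1/2" by (simp add: bernoulli.simps)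

lemma poch_neg:
  assumes "q \<le> k"
  shows "pochhammer (- of_nat k :: real) q = (-1)^q * fact k / fact (k - q)"
  using assms
proof (induction q)
  case 0 thus ?case by simp
next
  case (Suc q)
  hence IH: "pochhammer (- of_nat k :: real) q = (-1)^q * fact k / fact (k - q)" by simp
  have kq: "k - q = Suc (k - Suc q)" using Suc.prems by simp
  have f: "fact (k - q) = (of_nat (k - q) :: real) * fact (k - Suc q)"
    by (metis kq fact_Suc)
  have "pochhammer (- of_nat k :: real) (Suc q) = (-1)^q * fact k / fact (k - q) * (- of_nat k + of_nat q)"
    by (simp add: pochhammer_Suc IH)
  also have "- of_nat k + of_nat q = - (of_nat (k - q) :: real)" using Suc.prems by (simp add: of_nat_diff)
  also have "(-1)^q * fact k / fact (k - q) * - (of_nat (k - q) :: real) = (-1)^Suc q * fact k / fact (k - Suc q)"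
    using Suc.prems by (simp add: f field_simps)
  finally show ?case .
qed

lemma efps_exp: "efps = fps_exp 1" by (rule fps_ext) (simp add: efps_def)
lemma wfps_exp: "wfps = 1 - fps_exp (-1)"
  by (rule fps_ext) (simp add: wfps_def)

lemma ew: "efps * wfps = efps - 1"
  unfolding efps_exp wfps_exp by (simp add: algebra_simps fps_exp_add_mult[symmetric])

lemma e1_nz: "efps - 1 \<noteq> 0"
proof
  assume "efps - 1 = 0"
  hence "(efps - 1) $ 1 = 0" by simp
  thus False by (simp add: efps_def)
qed

lemma a_be: "afps = bfps * efps"
proof -
  have "afps * (efps - 1) = fps_X * efps" using aw ew by (metis mult.assoc mult.commute)
  also have "\<dots> = (bfps * efps) * (efps - 1)" using be by (metis mult.assoc mult.commute)
  finally show ?thesis using e1_nz by simp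
qed

lemma b_aX: "bfps = afps - fps_X"
proof -
  have "(afps - fps_X) * (efps - 1) = fps_X"
    using be by (simp add: a_be algebra_simps)
  hence "bfps * (efps - 1) = (afps - fps_X) * (efps - 1)" using be by simp
  thus ?thesis using e1_nz by simp
qed

lemma bernpoly1: "bernpoly n 1 / fact n = (bfps * efps) $ n"
  unfolding bernpoly_def fps_mult_nth bfps_def efps_def
  by (simp add: atLeast0AtMost sum_divide_distrib binomial_fact field_simps)

lemma bernpoly0: "bernpoly n 0 = bernoulli n"
  unfolding bernpoly_def
  by (simp add: power_0_left if_distrib cong: if_cong) 




definition g :: "real \<Rightarrow> nat \<Rightarrow> nat \<Rightarrow> real" where
  "g z m k = mbp_rev (k # replicate m 0) z"

lemma g_Suc: "g z (Suc m) k = - (1 / of_nat (Suc k)) * g z m (Suc k) - (1/2) * g z m k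
   + (\<Sum>q=1..k. pochhammer (- of_nat k) q * bernoulli (Suc q) / fact (Suc q) * g z m (k - q))"
  by (simp add: g_def)

lemma g_0: "g z 0 k = - bernpoly (Suc k) z / of_nat (Suc k)"
  by (simp add: g_def)

definition Gf :: "real \<Rightarrow> nat \<Rightarrow> real fps" where
  "Gf z m = Abs_fps (\<lambda>k. g z m k / fact k)"

definition S :: "real fps \<Rightarrow> real fps" where
  "S F = - fps_shift 1 (afps * F)"

lemma sum_split2: "(\<Sum>i=0..Suc k. f i) = f 0 + f 1 + (\<Sum>q=1..k. f (Suc q))"
proof -
  have "(\<Sum>i=0..Suc k. f i) = f 0 + (\<Sum>i=Suc 0..Suc k. f i)" by (rule sum.atLeast_Suc_atMost) simp
  also have "(\<Sum>i=Suc 0..Suc k. f i) = f (Suc 0) + (\<Sum>i=Suc 1..Suc k. f i)"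
    using sum.atLeast_Suc_atMost[of "Suc 0" "Suc k" f] by simp
  also have "(\<Sum>i=Suc 1..Suc k. f i) = (\<Sum>q=1..k. f (Suc q))" by (rule sum.shift_bounds_cl_Suc_ivl)
  finally show ?thesis by (simp add: add.assoc)
qed

lemma Gf_Suc: "Gf z (Suc m) = S (Gf z m)"
proof (rule fps_ext)
  fix k
  let ?G = "\<lambda>i. g z m i / fact i"
  have "S (Gf z m) $ k = - (\<Sum>i=0..Suc k. afps $ i * ?G (Suc k - i))"
    by (simp add: S_def fps_mult_nth Gf_def)
  also have "\<dots> = - (?G (Suc k) + (1/2) * ?G k + (\<Sum>q=1..k. afps $ Suc q * ?G (k - q)))"
    by (simp only: sum_split2) (simp add: afps_def bern1[simplified])
  also have "\<dots> = Gf z (Suc m) $ k"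
  proof -
    have t: "pochhammer (- of_nat k) q * bernoulli (Suc q) / fact (Suc q) * g z m (k - q) / fact k
            = - (afps $ Suc q * ?G (k - q))" if "q \<in> {1..k}" for q
    proof -
      have "q \<le> k" using that by simp
      thus ?thesis by (simp add: poch_neg afps_def field_simps del: fact_Suc)
    qed
    have "Gf z (Suc m) $ k = (- (1 / of_nat (Suc k)) * g z m (Suc k) - (1/2) * g z m k) / fact k
       + (\<Sum>q=1..k. pochhammer (- of_nat k) q * bernoulli (Suc q) / fact (Suc q) * g z m (k - q) / fact k)"
      by (simp add: Gf_def g_Suc add_divide_distrib sum_divide_distrib)
    also have "(\<Sum>q=1..k. pochhammer (- of_nat k) q * bernoulli (Suc q) / fact (Suc q) * g z m (k - q) / fact k)
       = - (\<Sum>q=1..k. afps $ Suc q * ?G (k - q))"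
      using t by (simp add: sum_negf[symmetric])
    also have "(- (1 / of_nat (Suc k)) * g z m (Suc k) - (1/2) * g z m k) / fact k = - ?G (Suc k) - (1/2) * ?G k"
      by (simp add: field_simps del: of_nat_Suc)
    finally show ?thesis by simp
  qed
  finally show "Gf z (Suc m) $ k = S (Gf z m) $ k" by simp
qed

lemma S_linear: "S (F + H) = S F + S H" by (rule fps_ext) (simp add: S_def algebra_simps)

lemma Gf1: "Gf 1 0 = S 1"
  by (rule fps_ext) (simp add: Gf_def S_def g_0 bernpoly1[symmetric] a_be del: of_nat_Suc)

lemma Gf0: "Gf 0 0 = S 1 + 1"
proof (rule fps_ext)
  fix k
  have "bfps $ Suc k = afps $ Suc k - (if k = 0 then 1 else 0)" by (simp add: b_aX)
  thus "Gf 0 0 $ k = (S 1 + 1) $ k"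
    by (simp add: Gf_def S_def g_0 bernpoly0 bfps_def del: of_nat_Suc)
qed




definition phi :: "nat \<Rightarrow> real fps" where "phi n = (S ^^ n) 1"
definition c :: "nat \<Rightarrow> real" where "c n = phi n $ 0"
definition v :: "real fps" where "v = fps_shift 1 wfps"

lemma phi_Suc: "phi (Suc n) = S (phi n)" by (simp add: phi_def)

lemma X_shift: "fps_X * fps_shift (Suc 0) F = F - fps_const (F $ 0)" for F :: "real fps"
proof (rule fps_ext)
  fix n show "(fps_X * fps_shift (Suc 0) F) $ n = (F - fps_const (F $ 0)) $ n"
    using fps_X_mult_nth[of "fps_shift (Suc 0) F" n] by (cases n) simp_all
qed

lemma negw_pow: "(- wfps) ^ j = fps_const ((-1)^j) * wfps ^ j"
proof (induction j)
  case 0 thus ?case by simp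
next
  case (Suc j)
  have m: "- wfps = fps_const (-1) * wfps" by (rule fps_ext) simp
  have "(- wfps) ^ Suc j = (fps_const (-1) * wfps) * (fps_const ((-1)^j) * wfps ^ j)"
    by (simp only: power_Suc Suc.IH m[symmetric])
  also have "\<dots> = (fps_const (-1) * fps_const ((-1)^j)) * (wfps * wfps ^ j)" by (simp only: ac_simps)
  also have "\<dots> = fps_const ((-1)^Suc j) * wfps ^ Suc j" by (simp only: fps_const_mult power_Suc mult_minus1)
  finally show ?case .
qed

lemma a0: "afps $ 0 = 1" by (simp add: afps_def)

lemma step1: "fps_X * phi (Suc n) = fps_const (c n) - afps * phi n"
  by (simp add: phi_Suc S_def X_shift c_def a0)

lemma w_Xv: "wfps = fps_X * v"
  by (rule fps_ext) (simp add: v_def fps_X_mult_nth wfps_def)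

lemma v0: "v $ 0 = 1" by (simp add: v_def wfps_def)

lemma step2: "wfps * phi (Suc n) + phi n = fps_const (c n) * v"
proof -
  have "fps_X * (wfps * phi (Suc n) + phi n) = wfps * (fps_X * phi (Suc n)) + fps_X * phi n"
    by (simp add: algebra_simps)
  also have "\<dots> = fps_const (c n) * wfps - (afps * wfps) * phi n + fps_X * phi n"
    by (simp add: step1 algebra_simps)
  also have "\<dots> = fps_const (c n) * wfps" by (simp only: aw) simp
  also have "\<dots> = fps_X * (fps_const (c n) * v)" by (simp add: w_Xv algebra_simps)
  finally show ?thesis by simp
qed

lemma psi: "(- wfps) ^ n * phi n = 1 - (\<Sum>j<n. fps_const (c j) * (- wfps) ^ j * v)"
proof (induction n)
  case 0 thus ?case by (simp add: phi_def)
next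
  case (Suc n)
  have "(- wfps) ^ Suc n * phi (Suc n) = (- wfps) ^ n * (- (wfps * phi (Suc n)))" by (simp add: algebra_simps)
  also have "- (wfps * phi (Suc n)) = phi n - fps_const (c n) * v" using step2[of n] by (simp add: algebra_simps)
  also have "(- wfps) ^ n * (phi n - fps_const (c n) * v) = (- wfps) ^ n * phi n - fps_const (c n) * (- wfps) ^ n * v"
    by (simp add: algebra_simps)
  finally show ?case using Suc.IH by (simp add: algebra_simps)
qed

lemma psi_coeff: "((- wfps) ^ n * phi n) $ i = 0" if "i < n"
proof -
  have e: "(- wfps) ^ n * phi n = fps_X ^ n * ((- v) ^ n * phi n)"
  proof -
    have "- wfps = fps_X * (- v)" by (simp add: w_Xv)
    hence "(- wfps) ^ n = fps_X ^ n * (- v) ^ n" by (metis power_mult_distrib)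
    thus ?thesis by (simp only: mult.assoc)
  qed
  show ?thesis unfolding e using that by (simp add: fps_X_power_mult_nth)
qed

lemma wpow_coeff: "(wfps ^ n) $ n = 1"
proof -
  have e: "wfps ^ n = fps_X ^ n * v ^ n" by (metis w_Xv power_mult_distrib)
  show ?thesis unfolding e by (simp add: fps_X_power_mult_nth fps_nth_power_0 v0)
qed

definition L :: "nat \<Rightarrow> real fps" where
  "L n = (\<Sum>j\<le>n. fps_const (1 / of_nat (Suc j)) * wfps ^ Suc j)"

lemma deriv_w: "fps_deriv wfps = 1 - wfps"
  by (rule fps_ext) (simp add: wfps_def field_simps del: of_nat_Suc)

lemma deriv_L: "fps_deriv (L n) = 1 - wfps ^ Suc n"
proof -
  have "fps_deriv (L n) = (\<Sum>j\<le>n. wfps ^ j - wfps ^ Suc j)"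
    unfolding L_def fps_deriv_sum
  proof (rule sum.cong[OF refl])
    fix j
    have "fps_const (1 / of_nat (Suc j)) * fps_const (of_nat (Suc j)) = (1 :: real fps)"
      by (simp del: of_nat_Suc)
    have "fps_deriv (fps_const (1 / of_nat (Suc j)) * wfps ^ Suc j)
       = (fps_const (1 / of_nat (Suc j)) * fps_const (of_nat (Suc j))) * ((1 - wfps) * wfps ^ j)"
      by (simp only: fps_deriv_mult_const_left fps_deriv_power deriv_w diff_Suc_1 mult.assoc)
    also have "\<dots> = wfps ^ j - wfps ^ Suc j" by (simp only: \<open>_ = 1\<close> mult_1 power_Suc left_diff_distrib mult_1)
    finally show "fps_deriv (fps_const (1 / of_nat (Suc j)) * wfps ^ Suc j) = wfps ^ j - wfps ^ Suc j" .
  qed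
  also have "\<dots> = 1 - wfps ^ Suc n"
    by (simp only: sum_telescope power_0)
  finally show ?thesis .
qed

lemma L_coeff: "(fps_X - L n) $ Suc n = 0"
proof -
  have "fps_deriv (fps_X - L n) = wfps ^ Suc n" by (simp add: deriv_L)
  hence "fps_deriv (fps_X - L n) $ n = 0"
    by (simp add: w_Xv power_mult_distrib fps_X_power_mult_nth del: power_Suc)
  hence "of_nat (n + 1) * (fps_X - L n) $ (n + 1) = (0::real)" by (simp only: fps_deriv_nth)
  hence "(fps_X - L n) $ (n + 1) = 0" by (simp only: mult_eq_0_iff of_nat_eq_0_iff) simp
  thus ?thesis by simp
qed

lemma c_formula: "c n * (-1)^n = 1 / of_nat (Suc n)"
proof (induction n rule: less_induct)
  case (less n)
  have A: "(fps_X * ((- wfps) ^ Suc n * phi (Suc n))) $ Suc n = 0"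
    using psi_coeff[of n "Suc n"] by (simp add: fps_X_mult_nth)
  have B: "fps_X * ((- wfps) ^ Suc n * phi (Suc n)) = fps_X - (\<Sum>j\<le>n. fps_const (c j * (-1)^j) * wfps ^ Suc j)"
  proof -
    have "fps_X * ((- wfps) ^ Suc n * phi (Suc n)) = fps_X - (\<Sum>j\<le>n. fps_X * (fps_const (c j) * (- wfps) ^ j * v))"
      unfolding psi by (simp add: algebra_simps sum_distrib_left lessThan_Suc_atMost)
    also have "(\<Sum>j\<le>n. fps_X * (fps_const (c j) * (- wfps) ^ j * v)) = (\<Sum>j\<le>n. fps_const (c j * (-1)^j) * wfps ^ Suc j)"
    proof (rule sum.cong[OF refl])
      fix j
      have "fps_X * (fps_const (c j) * (- wfps) ^ j * v) = (fps_const (c j) * fps_const ((-1)^j)) * (wfps ^ j * (fps_X * v))"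
        unfolding negw_pow by (simp only: ac_simps)
      thus "fps_X * (fps_const (c j) * (- wfps) ^ j * v) = fps_const (c j * (-1)^j) * wfps ^ Suc j"
        by (simp only: fps_const_mult w_Xv[symmetric] power_Suc ac_simps)
    qed
    finally show ?thesis .
  qed
  have C: "(fps_X - L n) $ Suc n = 0" by (rule L_coeff)
  have D: "(\<Sum>j\<le>n. (c j * (-1)^j - 1 / of_nat (Suc j)) * (wfps ^ Suc j) $ Suc n) = 0"
  proof -
    have "(\<Sum>j\<le>n. (c j * (-1)^j - 1 / of_nat (Suc j)) * (wfps ^ Suc j) $ Suc n)
        = (fps_X - L n) $ Suc n - (fps_X * ((- wfps) ^ Suc n * phi (Suc n))) $ Suc n"
      unfolding B L_def by (simp add: fps_sum_nth sum_subtractf left_diff_distrib)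
    thus ?thesis using A C by simp
  qed
  have E: "(\<Sum>j<n. (c j * (-1)^j - 1 / of_nat (Suc j)) * (wfps ^ Suc j) $ Suc n) = 0"
    using less.IH by (intro sum.neutral) simp
  have "(c n * (-1)^n - 1 / of_nat (Suc n)) * (wfps ^ Suc n) $ Suc n = 0"
    using D E by (simp add: lessThan_Suc_atMost[symmetric] del: of_nat_Suc)
  thus ?case using wpow_coeff[of "Suc n"] by simp
qed

lemma c_val: "c n = (-1)^n / of_nat (Suc n)"
proof -
  have "c n * (-1)^n * (-1)^n = (-1)^n / of_nat (Suc n)" using c_formula[of n] by simp
  thus ?thesis by (simp add: mult.assoc power_mult_distrib[symmetric])
qed

lemma Gf1_phi: "Gf 1 m = phi (Suc m)"
  by (induction m) (simp_all add: Gf1 Gf_Suc phi_def)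

lemma Gf0_phi: "Gf 0 m = phi (Suc m) + phi m"
  by (induction m) (simp_all add: Gf0 Gf_Suc phi_def S_linear)

lemma mbp_Gf: "mbp (replicate (Suc m) 0) z = Gf z m $ 0"
  by (simp add: mbp_def Gf_def g_def replicate_append_same)

theorem proposition3p6:
  fixes r :: nat
  assumes "r \<ge> 1"
  shows "mbp (replicate r 0) 1 = (-1) ^ r / of_nat (r + 1) \<and>
         mbp (replicate r 0) 0 = (-1) ^ (r + 1) / (of_nat r * of_nat (r + 1))"
proof -
  obtain m where r: "r = Suc m" using assms by (cases r) auto
  have 1: "mbp (replicate r 0) 1 = (-1) ^ r / of_nat (r + 1)"
    unfolding r mbp_Gf Gf1_phi by (simp add: c_def[symmetric] c_val del: of_nat_Suc)
  have "mbp (replicate r 0) 0 = (-1) ^ Suc m / of_nat (Suc (Suc m)) + (-1) ^ m / of_nat (Suc m)"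
    unfolding r mbp_Gf Gf0_phi by (simp add: c_def[symmetric] c_val del: of_nat_Suc)
  also have "\<dots> = (-1) ^ (r + 1) / (of_nat r * of_nat (r + 1))"
    unfolding r by (simp add: field_simps del: of_nat_Suc) (simp add: algebra_simps)
  finally show ?thesis using 1 by simp
qed

end
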